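(* Let $d,m$ be positive integers with $d\mid m$. Then $P(d,n)$ divides $P(m,n)$ for every positive integer $n$.
   Context: For positive integers $m,n$, let $\mathbf{Z}_m$ be the integers modulo $m$ and $T:\mathbf{Z}_m^n\to\mathbf{Z}_m^n$, $T(a_0,\dots,a_{n-1})=(a_0+a_1,a_1+a_2,\dots,a_{n-1}+a_0)$. For $\mathbf{a}\in\mathbf{Z}_m^n$ the cycle length of $(T^k\mathbf{a})_{k\ge0}$ is the smallest positive integer $P$ such that there is $N$ with $T^{k+P}\mathbf{a}=T^k\mathbf{a}$ for all $k\ge N$. $P(m,n)$ denotes the maximum of these cycle lengths over all $\mathbf{a}\in\mathbf{Z}_m^n$. *)

theory Defs
  imports Main
begin

text \<open>Elements of Z_m^n are represented as functions nat => int with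
  a i in {0..<m} for i < n (canonical residues) and a i = 0 for i >= n.\<close>

definition vecs :: "nat \<Rightarrow> nat \<Rightarrow> (nat \<Rightarrow> int) set" where
  "vecs m n = {a. (\<forall>i<n. a i \<in> {0..<int m}) \<and> (\<forall>i. n \<le> i \<longrightarrow> a i = 0)}"

definition Tmap :: "nat \<Rightarrow> nat \<Rightarrow> (nat \<Rightarrow> int) \<Rightarrow> (nat \<Rightarrow> int)" where
  "Tmap m n a = (\<lambda>i. if i < n then (a i + a ((i + 1) mod n)) mod int m else 0)"

definition cycle_length :: "nat \<Rightarrow> nat \<Rightarrow> (nat \<Rightarrow> int) \<Rightarrow> nat" where
  "cycle_length m n a =
     (LEAST P. 0 < P \<and> (\<exists>N. \<forall>k\<ge>N. (Tmap m n ^^ (k + P)) a = (Tmap m n ^^ k) a))"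

definition Pmax :: "nat \<Rightarrow> nat \<Rightarrow> nat" where
  "Pmax m n = Max (cycle_length m n ` vecs m n)"

end

theory Submission
  imports Defs
begin

definition evp :: "('a \<Rightarrow> 'a) \<Rightarrow> 'a \<Rightarrow> nat \<Rightarrow> bool" where
  "evp f x P = (\<exists>N. \<forall>k\<ge>N. (f ^^ (k + P)) x = (f ^^ k) x)"

lemma evp_mult:
  assumes "\<forall>k\<ge>N. (f ^^ (k + c)) x = (f ^^ k) x" "k \<ge> N"
  shows "(f ^^ (k + q * c)) x = (f ^^ k) x"
proof (induction q)
  case 0 then show ?case by simp
next
  case (Suc q)
  have "(f ^^ (k + Suc q * c)) x = (f ^^ ((k + q * c) + c)) x" by (simp add: algebra_simps)
  also have "\<dots> = (f ^^ (k + q * c)) x" using assms by simp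
  finally show ?case using Suc by simp
qed

lemma least_evp_dvd:
  assumes "0 < P" "evp f x P"
  defines "c \<equiv> (LEAST P. 0 < P \<and> (\<exists>N. \<forall>k\<ge>N. (f ^^ (k + P)) x = (f ^^ k) x))"
  shows "0 < c \<and> evp f x c \<and> c dvd P"
proof -
  have c: "0 < c \<and> (\<exists>N. \<forall>k\<ge>N. (f ^^ (k + c)) x = (f ^^ k) x)"
    unfolding c_def by (rule LeastI[of _ P]) (use assms in \<open>auto simp: evp_def\<close>)
  then obtain N1 where N1: "\<forall>k\<ge>N1. (f ^^ (k + c)) x = (f ^^ k) x" by blast
  obtain N2 where N2: "\<forall>k\<ge>N2. (f ^^ (k + P)) x = (f ^^ k) x" using assms by (auto simp: evp_def)
  define r where "r = P mod c"
  have P: "P = r + (P div c) * c" unfolding r_def by simp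
  have r: "\<forall>k\<ge>max N1 N2. (f ^^ (k + r)) x = (f ^^ k) x"
  proof (intro allI impI)
    fix k assume k: "k \<ge> max N1 N2"
    have "(f ^^ (k + r)) x = (f ^^ ((k + r) + (P div c) * c)) x"
      using evp_mult[OF N1, of "k + r"] k by simp
    also have "\<dots> = (f ^^ (k + P)) x" using P by (metis add.assoc)
    also have "\<dots> = (f ^^ k) x" using N2 k by simp
    finally show "(f ^^ (k + r)) x = (f ^^ k) x" .
  qed
  have "r = 0"
  proof (rule ccontr)
    assume "r \<noteq> 0"
    then have "c \<le> r" unfolding c_def using r by (intro Least_le) (metis max.boundedI neq0_conv)
    moreover have "r < c" unfolding r_def using c by simp
    ultimately show False by simp
  qed
  then show ?thesis using c by (auto simp: evp_def r_def)
qed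

lemma finite_evp:
  assumes "finite A" "\<And>k. (f ^^ k) x \<in> A"
  shows "\<exists>P>0. evp f x P"
proof -
  have "\<not> inj (\<lambda>k. (f ^^ k) x)"
  proof
    assume "inj (\<lambda>k. (f ^^ k) x)"
    moreover have "finite (range (\<lambda>k. (f ^^ k) x))"
      using assms by (meson finite_subset image_subsetI)
    ultimately show False using finite_imageD by blast
  qed
  then obtain i j where ij: "i \<noteq> j" "(f ^^ i) x = (f ^^ j) x" unfolding inj_def by blast
  have "\<exists>i j. i < j \<and> (f ^^ i) x = (f ^^ j) x"
    using ij by (metis linorder_neqE_nat)
  then obtain i j where ij: "i < j" "(f ^^ i) x = (f ^^ j) x" by blast
  have "\<forall>k\<ge>i. (f ^^ (k + (j - i))) x = (f ^^ k) x"
  proof (intro allI impI)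
    fix k assume "k \<ge> i"
    then have "k + (j - i) = (k - i) + j" using ij by simp
    then have "(f ^^ (k + (j - i))) x = (f ^^ (k - i)) ((f ^^ j) x)"
      by (simp only: funpow_add comp_def)
    also have "\<dots> = (f ^^ (k - i)) ((f ^^ i) x)" using ij by simp
    also have "\<dots> = (f ^^ ((k - i) + i)) x" by (simp only: funpow_add comp_def)
    also have "\<dots> = (f ^^ k) x" using \<open>k \<ge> i\<close> by simp
    finally show "(f ^^ (k + (j - i))) x = (f ^^ k) x" .
  qed
  then show ?thesis using ij unfolding evp_def by (intro exI[of _ "j - i"]) auto
qed


definition Sm :: "nat \<Rightarrow> (nat \<Rightarrow> int) \<Rightarrow> (nat \<Rightarrow> int)" where
  "Sm n a = (\<lambda>i. if i < n then a i + a ((i + 1) mod n) else 0)"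

definition Rm :: "nat \<Rightarrow> (nat \<Rightarrow> int) \<Rightarrow> (nat \<Rightarrow> int)" where
  "Rm n a = (\<lambda>i. if i < n then a ((i + 1) mod n) else 0)"

definition delta :: "nat \<Rightarrow> nat \<Rightarrow> int" where
  "delta j = (\<lambda>i. if i = j then 1 else 0)"

lemma Sm_add: "(Sm n ^^ k) (\<lambda>i. a i + b i) = (\<lambda>i. (Sm n ^^ k) a i + (Sm n ^^ k) b i)"
  by (induction k) (auto simp: Sm_def fun_eq_iff)

lemma Sm_smult: "(Sm n ^^ k) (\<lambda>i. c * a i) = (\<lambda>i. c * (Sm n ^^ k) a i)"
  by (induction k) (auto simp: Sm_def fun_eq_iff algebra_simps)

lemma Sm_zero: "(Sm n ^^ k) (\<lambda>i. 0) = (\<lambda>i. 0)"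
  by (induction k) (auto simp: Sm_def fun_eq_iff)

lemma Sm_Rm1: "Sm n (Rm n b) = Rm n (Sm n b)"
  by (auto simp: Sm_def Rm_def fun_eq_iff)

lemma Sm_Rm: "(Sm n ^^ k) (Rm n a) = Rm n ((Sm n ^^ k) a)"
  by (induction k) (auto simp: Sm_Rm1)

definition Gs :: "nat \<Rightarrow> int \<Rightarrow> nat \<Rightarrow> nat \<Rightarrow> (nat \<Rightarrow> int) set" where
  "Gs n m N P = {a. \<forall>k\<ge>N. \<forall>i. (Sm n ^^ (k + P)) a i mod m = (Sm n ^^ k) a i mod m}"

lemma Gs_add:
  assumes a: "a \<in> Gs n m N P" and b: "b \<in> Gs n m N P"
  shows "(\<lambda>i. a i + b i) \<in> Gs n m N P"
  unfolding Gs_def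
proof (intro CollectI allI impI)
  fix k i assume k: "N \<le> k"
  have 1: "(Sm n ^^ (k + P)) a i mod m = (Sm n ^^ k) a i mod m" using a k unfolding Gs_def by blast
  have 2: "(Sm n ^^ (k + P)) b i mod m = (Sm n ^^ k) b i mod m" using b k unfolding Gs_def by blast
  show "(Sm n ^^ (k + P)) (\<lambda>i. a i + b i) i mod m = (Sm n ^^ k) (\<lambda>i. a i + b i) i mod m"
    unfolding Sm_add by (rule mod_add_cong[OF 1 2])
qed

lemma Gs_smult:
  assumes a: "a \<in> Gs n m N P"
  shows "(\<lambda>i. c * a i) \<in> Gs n m N P"
  unfolding Gs_def
proof (intro CollectI allI impI)
  fix k i assume k: "N \<le> k"
  have 1: "(Sm n ^^ (k + P)) a i mod m = (Sm n ^^ k) a i mod m" using a k unfolding Gs_def by blast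
  have "c * (Sm n ^^ (k + P)) a i mod m = c * ((Sm n ^^ (k + P)) a i mod m) mod m"
    by (rule mod_mult_right_eq[symmetric])
  also have "\<dots> = c * ((Sm n ^^ k) a i mod m) mod m" by (simp only: 1)
  also have "\<dots> = c * (Sm n ^^ k) a i mod m" by (rule mod_mult_right_eq)
  finally show "(Sm n ^^ (k + P)) (\<lambda>i. c * a i) i mod m = (Sm n ^^ k) (\<lambda>i. c * a i) i mod m"
    unfolding Sm_smult .
qed

lemma Gs_zero: "(\<lambda>i. 0) \<in> Gs n m N P"
  unfolding Gs_def mem_Collect_eq Sm_zero by (intro allI impI refl)

lemma Gs_Rm:
  assumes a: "a \<in> Gs n m N P"
  shows "Rm n a \<in> Gs n m N P"
  unfolding Gs_def
proof (intro CollectI allI impI)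
  fix k i assume k: "N \<le> k"
  show "(Sm n ^^ (k + P)) (Rm n a) i mod m = (Sm n ^^ k) (Rm n a) i mod m"
  proof (cases "i < n")
    case True
    have "(Sm n ^^ (k + P)) a ((i + 1) mod n) mod m = (Sm n ^^ k) a ((i + 1) mod n) mod m"
      using a k unfolding Gs_def by blast
    then show ?thesis unfolding Sm_Rm unfolding Rm_def using True by (simp only: if_True)
  next
    case False
    then show ?thesis unfolding Sm_Rm unfolding Rm_def by (simp only: if_False)
  qed
qed

lemma Rm_delta0: "0 < n \<Longrightarrow> Rm n (delta 0) = delta (n - 1)"
  by (auto simp: Rm_def delta_def fun_eq_iff)

lemma Rm_deltaS: "Suc j < n \<Longrightarrow> Rm n (delta (Suc j)) = delta j"
proof -
  assume j: "Suc j < n"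
  have "(if i < n then delta (Suc j) ((i + 1) mod n) else 0) = delta j i" for i
  proof (cases "i + 1 < n")
    case True then show ?thesis by (auto simp: delta_def)
  next
    case False
    then show ?thesis using j by (cases "i + 1 = n") (auto simp: delta_def)
  qed
  then show ?thesis by (auto simp: Rm_def fun_eq_iff)
qed

lemma Gs_delta:
  assumes "0 < n" "delta 0 \<in> Gs n m N P" "j < n"
  shows "delta j \<in> Gs n m N P"
proof -
  have "j \<le> n - 1" using assms(3) by simp
  then show ?thesis
proof (induction j rule: inc_induct)
  case base
  then show ?case using Gs_Rm[OF assms(2)] Rm_delta0[OF assms(1)] by simp
next
  case (step j)
  have "Suc j < n" using step by simp
  then show ?case using step Gs_Rm[of "delta (Suc j)" n m N P] Rm_deltaS[of j n] by simp
qed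
qed

lemma Gs_all:
  assumes "0 < n" "delta 0 \<in> Gs n m N P" "\<forall>i\<ge>n. a i = 0"
  shows "a \<in> Gs n m N P"
proof -
  have "\<forall>n'\<le>n. (\<lambda>i. \<Sum>j<n'. a j * delta j i) \<in> Gs n m N P"
  proof (intro allI impI)
    fix n' assume "n' \<le> n"
    then show "(\<lambda>i. \<Sum>j<n'. a j * delta j i) \<in> Gs n m N P"
    proof (induction n')
      case 0 then show ?case using Gs_zero by simp
    next
      case (Suc n')
      have "delta n' \<in> Gs n m N P" using Gs_delta[OF assms(1,2)] Suc by simp
      then have "(\<lambda>i. a n' * delta n' i) \<in> Gs n m N P" by (rule Gs_smult)
      then show ?case using Gs_add Suc by simp
    qed
  qed
  moreover have "(\<lambda>i. \<Sum>j<n. a j * delta j i) = a"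
  proof
    fix x
    have "(\<Sum>j<n. a j * delta j x) = (\<Sum>j<n. if x = j then a j else 0)"
      by (rule sum.cong) (auto simp: delta_def)
    also have "\<dots> = a x" using assms(3) by (simp add: sum.delta not_less)
    finally show "(\<Sum>j<n. a j * delta j x) = a x" .
  qed
  ultimately show ?thesis by auto
qed


lemma Tmap_mod: "Tmap m n (\<lambda>i. b i mod int m) = (\<lambda>i. Sm n b i mod int m)"
  unfolding fun_eq_iff Tmap_def Sm_def
  by (simp only: mod_add_eq if_distrib[of "\<lambda>x. x mod int m"] mod_0 simp_thms)

lemma Tmap_pow: "(Tmap m n ^^ k) (\<lambda>i. b i mod int m) = (\<lambda>i. (Sm n ^^ k) b i mod int m)"
proof (induction k)
  case 0 show ?case by (simp only: funpow_0)
next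
  case (Suc k)
  have "(Tmap m n ^^ Suc k) (\<lambda>i. b i mod int m) = Tmap m n ((Tmap m n ^^ k) (\<lambda>i. b i mod int m))"
    by (simp only: funpow.simps comp_def)
  also have "\<dots> = Tmap m n (\<lambda>i. (Sm n ^^ k) b i mod int m)" by (simp only: Suc)
  also have "\<dots> = (\<lambda>i. Sm n ((Sm n ^^ k) b) i mod int m)" by (rule Tmap_mod)
  also have "\<dots> = (\<lambda>i. (Sm n ^^ Suc k) b i mod int m)" by (simp only: funpow.simps comp_def)
  finally show ?case .
qed

lemma vecs_mod:
  assumes a: "a \<in> vecs m n"
  shows "(\<lambda>i. a i mod int m) = a"
proof
  fix i
  show "a i mod int m = a i"
  proof (cases "i < n")
    case True
    then have "0 \<le> a i" "a i < int m" using a unfolding vecs_def by auto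
    then show ?thesis by (rule mod_pos_pos_trivial)
  next
    case False
    then have "a i = 0" using a unfolding vecs_def by auto
    then show ?thesis by simp
  qed
qed

lemma finite_vecs: "finite (vecs m n)"
proof (rule finite_subset)
  show "vecs m n \<subseteq> {f. \<forall>x. (x \<in> {0..<n} \<longrightarrow> f x \<in> {0..<int m}) \<and> (x \<notin> {0..<n} \<longrightarrow> f x = 0)}"
  proof
    fix f assume f: "f \<in> vecs m n"
    have "\<forall>x. (x \<in> {0..<n} \<longrightarrow> f x \<in> {0..<int m}) \<and> (x \<notin> {0..<n} \<longrightarrow> f x = 0)"
    proof (intro allI conjI impI)
      fix x assume "x \<in> {0..<n}"
      then show "f x \<in> {0..<int m}" using f unfolding vecs_def by simp
    next
      fix x assume "x \<notin> {0..<n}"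
      then show "f x = 0" using f unfolding vecs_def by simp
    qed
    then show "f \<in> {f. \<forall>x. (x \<in> {0..<n} \<longrightarrow> f x \<in> {0..<int m}) \<and> (x \<notin> {0..<n} \<longrightarrow> f x = 0)}"
      unfolding mem_Collect_eq .
  qed
  show "finite {f. \<forall>x. (x \<in> {0..<n} \<longrightarrow> f x \<in> {0..<int m}) \<and> (x \<notin> {0..<n} \<longrightarrow> f x = (0::int))}"
    by (rule finite_set_of_finite_funs) simp_all
qed

lemma Tmap_vecs: "0 < m \<Longrightarrow> a \<in> vecs m n \<Longrightarrow> Tmap m n a \<in> vecs m n"
  by (auto simp: vecs_def Tmap_def)

lemma Tmap_pow_vecs: "0 < m \<Longrightarrow> a \<in> vecs m n \<Longrightarrow> (Tmap m n ^^ k) a \<in> vecs m n"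
  by (induction k) (auto simp: Tmap_vecs)

definition e0 :: "nat \<Rightarrow> nat \<Rightarrow> int" where
  "e0 m = (\<lambda>i. delta 0 i mod int m)"

lemma e0_vecs: "0 < m \<Longrightarrow> 0 < n \<Longrightarrow> e0 m \<in> vecs m n"
  by (auto simp: vecs_def e0_def delta_def)

lemma evp_Gs: "evp (Tmap m n) (\<lambda>i. b i mod int m) P \<longleftrightarrow> (\<exists>N. b \<in> Gs n (int m) N P)"
  unfolding evp_def Gs_def Tmap_pow by (simp add: fun_eq_iff)

lemma cl_eq: "cycle_length m n a = (LEAST P. 0 < P \<and> (\<exists>N. \<forall>k\<ge>N. (Tmap m n ^^ (k + P)) a = (Tmap m n ^^ k) a))"
  by (simp add: cycle_length_def)

lemma Pmax_e0:
  assumes "0 < m" "0 < n"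
  shows "Pmax m n = cycle_length m n (e0 m) \<and> 0 < cycle_length m n (e0 m)
         \<and> evp (Tmap m n) (e0 m) (cycle_length m n (e0 m))"
proof -
  have "\<exists>P>0. evp (Tmap m n) (e0 m) P"
    by (rule finite_evp[OF finite_vecs[of m n]]) (use Tmap_pow_vecs e0_vecs assms in auto)
  then obtain P where "0 < P" "evp (Tmap m n) (e0 m) P" by blast
  from least_evp_dvd[OF this] have c: "0 < cycle_length m n (e0 m)"
      "evp (Tmap m n) (e0 m) (cycle_length m n (e0 m))"
    unfolding cl_eq by auto
  define c where "c = cycle_length m n (e0 m)"
  obtain N where N: "delta 0 \<in> Gs n (int m) N c" using c(2) unfolding c_def e0_def evp_Gs by blast
  have le: "cycle_length m n a \<le> c" if a: "a \<in> vecs m n" for a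
  proof -
    have "a \<in> Gs n (int m) N c"
      by (rule Gs_all[OF assms(2) N]) (use a in \<open>auto simp: vecs_def\<close>)
    then have "evp (Tmap m n) (\<lambda>i. a i mod int m) c" unfolding evp_Gs by blast
    then have "evp (Tmap m n) a c" using vecs_mod[OF a] by simp
    from least_evp_dvd[OF _ this] c have "cycle_length m n a dvd c"
      unfolding cl_eq c_def by auto
    then show ?thesis using c unfolding c_def by (simp add: dvd_imp_le)
  qed
  have "Pmax m n = c" unfolding Pmax_def
    by (rule Max_eqI) (use le finite_vecs e0_vecs assms c_def in auto)
  then show ?thesis using c c_def by simp
qed

theorem proposition3p1:
  fixes d m n :: nat
  assumes "0 < d" and "0 < m" and "d dvd m" and "0 < n"
  shows "Pmax d n dvd Pmax m n"
proof -
  define c where "c = cycle_length m n (e0 m)"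
  have m: "Pmax m n = c" "0 < c" "evp (Tmap m n) (e0 m) c"
    using Pmax_e0[OF assms(2,4)] unfolding c_def by blast+
  obtain N where N: "delta 0 \<in> Gs n (int m) N c" using m(3) unfolding e0_def evp_Gs by (elim exE)
  have dm: "int d dvd int m" using assms(3) by simp
  have "delta 0 \<in> Gs n (int d) N c"
    unfolding Gs_def
  proof (intro CollectI allI impI)
    fix k i assume k: "N \<le> k"
    have "(Sm n ^^ (k + c)) (delta 0) i mod int m = (Sm n ^^ k) (delta 0) i mod int m"
      using N k unfolding Gs_def by blast
    then have "(Sm n ^^ (k + c)) (delta 0) i mod int m mod int d = (Sm n ^^ k) (delta 0) i mod int m mod int d"
      by (rule arg_cong)
    then show "(Sm n ^^ (k + c)) (delta 0) i mod int d = (Sm n ^^ k) (delta 0) i mod int d"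
      by (simp only: mod_mod_cancel[OF dm])
  qed
  then have ed: "evp (Tmap d n) (e0 d) c" unfolding e0_def evp_Gs by blast
  have dv: "cycle_length d n (e0 d) dvd c"
    unfolding cl_eq using least_evp_dvd[OF m(2) ed] by (elim conjE)
  have eq: "Pmax d n = cycle_length d n (e0 d)" using Pmax_e0[OF assms(1,4)] by blast
  show ?thesis unfolding eq m(1) by (rule dv)
qed

end
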